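(* Let $(P,<)$ be a finite graded poset with rank function $\rho$, and let $w:P\to\mathbb{R}$ be a weight function. Let $G$ be the graph with vertex set $P$ having an edge between $x$ and $y$ if and only if $x\lessdot y$ or $y\lessdot x$; an edge $\{x,y\}$ with $x\lessdot y$ is given weight $w(y)$. Then the maximum score attainable by a legal move sequence in the generalized taxman game on $(P,<,w)$ equals the maximum weight of a matching of $G$ that contains no flat alternating cycle. More precisely, legal move sequences correspond to flat-alternating-cycle-free matchings of $G$ in such a way that the score of the move sequence equals the weight of the matching: from a legal move sequence $p_1,\dots,p_n$ one obtains such a matching $\{(q_i,p_i)\}$ with $q_i\lessdot p_i$, where $q_i$ is a maximal element among those removed by the taxman in move $i$; and conversely, for every flat-alternating-cycle-free matching $\{(x_i,y_i)\}$ with $x_i\lessdot y_i$, the elements $y_i$ can be ordered so as to form a legal move sequence whose score is $\sum_i w(y_i)$.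
   Context: A strict partial order $(P,<)$ is irreflexive, transitive and asymmetric. For $p,q\in P$, $p$ covers $q$, written $q\lessdot p$, if $q<p$ and there is no $x\in P$ with $q<x<p$. A graded poset is a poset $(P,<)$ with a rank function $\rho:P\to\mathbb{N}$ such that $q<p$ implies $\rho(q)<\rho(p)$ and $q\lessdot p$ implies $\rho(p)=\rho(q)+1$. The generalized taxman game on $(P,<,w)$, with $P$ finite and $w:P\to\mathbb{R}$: initially all elements of $P$ are in play. A move consists of picking an element $p$ still in play such that some $q<p$ is still in play (a legal pick); the player gains $w(p)$ points, $p$ is removed, and the taxman removes all elements $a<p$ still in play. A legal move sequence is a finite sequence of legal picks made in succession; its score is the sum of the weights of the picked elements. When no legal picks remain, the taxman claims all remaining elements. For a graph $G$ whose vertex set is a graded poset, a matching is a set of edges no two sharing an endpoint. A cycle is alternating (with respect to a matching) if exactly every other edge of the cycle lies in the matching. A cycle is flat if there is an integer $n$ such that all its vertices have rank $n$ or $n+1$. *)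

theory Defs
  imports Complex_Main
begin

definition strict_po :: "'a set \<Rightarrow> ('a \<Rightarrow> 'a \<Rightarrow> bool) \<Rightarrow> bool" where
  "strict_po P lt \<longleftrightarrow>
     (\<forall>x\<in>P. \<not> lt x x) \<and>
     (\<forall>x\<in>P. \<forall>y\<in>P. \<forall>z\<in>P. lt x y \<longrightarrow> lt y z \<longrightarrow> lt x z) \<and>
     (\<forall>x\<in>P. \<forall>y\<in>P. lt x y \<longrightarrow> \<not> lt y x)"

definition covers :: "'a set \<Rightarrow> ('a \<Rightarrow> 'a \<Rightarrow> bool) \<Rightarrow> 'a \<Rightarrow> 'a \<Rightarrow> bool" where
  "covers P lt q p \<longleftrightarrow> q \<in> P \<and> p \<in> P \<and> lt q p \<and> \<not> (\<exists>x\<in>P. lt q x \<and> lt x p)"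

definition graded :: "'a set \<Rightarrow> ('a \<Rightarrow> 'a \<Rightarrow> bool) \<Rightarrow> ('a \<Rightarrow> nat) \<Rightarrow> bool" where
  "graded P lt \<rho> \<longleftrightarrow>
     (\<forall>p\<in>P. \<forall>q\<in>P. lt q p \<longrightarrow> \<rho> q < \<rho> p) \<and>
     (\<forall>p q. covers P lt q p \<longrightarrow> \<rho> p = \<rho> q + 1)"

text \<open>S is the set of elements still in play.\<close>
definition legal_pick :: "('a \<Rightarrow> 'a \<Rightarrow> bool) \<Rightarrow> 'a set \<Rightarrow> 'a \<Rightarrow> bool" where
  "legal_pick lt S p \<longleftrightarrow> p \<in> S \<and> (\<exists>q\<in>S. lt q p)"

definition do_move :: "('a \<Rightarrow> 'a \<Rightarrow> bool) \<Rightarrow> 'a set \<Rightarrow> 'a \<Rightarrow> 'a set" where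
  "do_move lt S p = S - {p} - {a \<in> S. lt a p}"

fun legal_seq :: "('a \<Rightarrow> 'a \<Rightarrow> bool) \<Rightarrow> 'a set \<Rightarrow> 'a list \<Rightarrow> bool" where
  "legal_seq lt S [] = True"
| "legal_seq lt S (p # ps) = (legal_pick lt S p \<and> legal_seq lt (do_move lt S p) ps)"

definition legal_move_seq :: "'a set \<Rightarrow> ('a \<Rightarrow> 'a \<Rightarrow> bool) \<Rightarrow> 'a list \<Rightarrow> bool" where
  "legal_move_seq P lt ps \<longleftrightarrow> legal_seq lt P ps"

definition score :: "('a \<Rightarrow> real) \<Rightarrow> 'a list \<Rightarrow> real" where
  "score w ps = sum_list (map w ps)"

text \<open>Elements in play just before move i (0-based).\<close>
definition state_before :: "'a set \<Rightarrow> ('a \<Rightarrow> 'a \<Rightarrow> bool) \<Rightarrow> 'a list \<Rightarrow> nat \<Rightarrow> 'a set" where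
  "state_before P lt ps i = foldl (do_move lt) P (take i ps)"

definition taxed :: "'a set \<Rightarrow> ('a \<Rightarrow> 'a \<Rightarrow> bool) \<Rightarrow> 'a list \<Rightarrow> nat \<Rightarrow> 'a set" where
  "taxed P lt ps i = {a \<in> state_before P lt ps i. lt a (ps ! i)}"

text \<open>The edge {x,y} of G with x \<lessdot> y is represented by the oriented pair (x,y).\<close>
definition hasse_edge :: "'a set \<Rightarrow> ('a \<Rightarrow> 'a \<Rightarrow> bool) \<Rightarrow> 'a \<Rightarrow> 'a \<Rightarrow> bool" where
  "hasse_edge P lt x y \<longleftrightarrow> covers P lt x y \<or> covers P lt y x"

definition hasse_matching :: "'a set \<Rightarrow> ('a \<Rightarrow> 'a \<Rightarrow> bool) \<Rightarrow> ('a \<times> 'a) set \<Rightarrow> bool" where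
  "hasse_matching P lt M \<longleftrightarrow>
     M \<subseteq> {(x, y). covers P lt x y} \<and>
     (\<forall>e\<in>M. \<forall>e'\<in>M. e \<noteq> e' \<longrightarrow> {fst e, snd e} \<inter> {fst e', snd e'} = {})"

definition in_matching :: "('a \<times> 'a) set \<Rightarrow> 'a \<Rightarrow> 'a \<Rightarrow> bool" where
  "in_matching M x y \<longleftrightarrow> (x, y) \<in> M \<or> (y, x) \<in> M"

definition flat_alt_cycle :: "'a set \<Rightarrow> ('a \<Rightarrow> 'a \<Rightarrow> bool) \<Rightarrow> ('a \<Rightarrow> nat) \<Rightarrow> ('a \<times> 'a) set \<Rightarrow> 'a list \<Rightarrow> bool" where
  "flat_alt_cycle P lt \<rho> M vs \<longleftrightarrow>
     (let k = length vs in
        k \<ge> 3 \<and> even k \<and> distinct vs \<and> set vs \<subseteq> P \<and>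
        (\<forall>i<k. hasse_edge P lt (vs ! i) (vs ! ((i + 1) mod k)) \<and>
               (in_matching M (vs ! i) (vs ! ((i + 1) mod k)) \<longleftrightarrow> even i)) \<and>
        (\<exists>n. \<forall>i<k. \<rho> (vs ! i) = n \<or> \<rho> (vs ! i) = n + 1))"

definition facf_matching :: "'a set \<Rightarrow> ('a \<Rightarrow> 'a \<Rightarrow> bool) \<Rightarrow> ('a \<Rightarrow> nat) \<Rightarrow> ('a \<times> 'a) set \<Rightarrow> bool" where
  "facf_matching P lt \<rho> M \<longleftrightarrow>
     hasse_matching P lt M \<and> \<not> (\<exists>vs. flat_alt_cycle P lt \<rho> M vs)"

definition matching_weight :: "('a \<Rightarrow> real) \<Rightarrow> ('a \<times> 'a) set \<Rightarrow> real" where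
  "matching_weight w M = (\<Sum>(x, y)\<in>M. w y)"

end

theory Submission
  imports Defs
begin

lemma hasse_edge_sym: "hasse_edge P lt x y = hasse_edge P lt y x"
  unfolding hasse_edge_def by blast
lemma in_matching_sym: "in_matching M x y = in_matching M y x"
  unfolding in_matching_def by blast

lemma foldl_do_move_sub: "foldl (do_move lt) S xs \<subseteq> S"
proof (induction xs arbitrary: S)
  case Nil then show ?case by simp
next
  case (Cons x xs)
  have "do_move lt S x \<subseteq> S" by (auto simp: do_move_def)
  with Cons.IH[of "do_move lt S x"] show ?case by simp
qed

lemma st_Suc: "i < length ps \<Longrightarrow>
  state_before P lt ps (Suc i) = do_move lt (state_before P lt ps i) (ps ! i)"
  by (simp add: state_before_def take_Suc_conv_app_nth)

lemma st_mono: assumes "i \<le> j" shows "state_before P lt ps j \<subseteq> state_before P lt ps i"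
proof -
  have "take j ps = take i ps @ take (j - i) (drop i ps)" using take_add[of i "j-i" ps] assms by simp
  thus ?thesis unfolding state_before_def by (simp add: foldl_do_move_sub)
qed

lemma legal_seq_iff: "legal_seq lt S ps \<longleftrightarrow>
   (\<forall>i<length ps. legal_pick lt (foldl (do_move lt) S (take i ps)) (ps ! i))"
proof (induction ps arbitrary: S)
  case Nil then show ?case by simp
next
  case (Cons p ps)
  show ?case by (simp add: Cons.IH All_less_Suc2)
qed

lemma legal_at: "legal_move_seq P lt ps \<Longrightarrow> i < length ps \<Longrightarrow>
   legal_pick lt (state_before P lt ps i) (ps ! i)"
  unfolding legal_move_seq_def state_before_def legal_seq_iff by blast

lemma cyc_nbrs:
  assumes C: "flat_alt_cycle P lt \<rho> M vs" and v: "v \<in> set vs"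
  shows "\<exists>u\<in>set vs. \<exists>b\<in>set vs. in_matching M v u \<and> hasse_edge P lt v b \<and> \<not> in_matching M v b"
proof -
  let ?k = "length vs"
  have k: "?k \<ge> 3" "even ?k" and E: "\<forall>i<?k. hasse_edge P lt (vs ! i) (vs ! ((i + 1) mod ?k)) \<and>
        (in_matching M (vs ! i) (vs ! ((i + 1) mod ?k)) \<longleftrightarrow> even i)"
    using C unfolding flat_alt_cycle_def Let_def by auto
  have E1: "\<And>i. i < ?k \<Longrightarrow> hasse_edge P lt (vs ! i) (vs ! ((i + 1) mod ?k))"
    using E by blast
  have E2: "\<And>i. i < ?k \<Longrightarrow> in_matching M (vs ! i) (vs ! ((i + 1) mod ?k)) \<longleftrightarrow> even i"
    using E by blast
  obtain a where a: "a < ?k" "v = vs ! a" using v by (auto simp: in_set_conv_nth)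
  have k0: "0 < ?k" using k(1) by linarith
  have mem: "\<And>i. i < ?k \<Longrightarrow> vs ! i \<in> set vs" by (rule nth_mem)
  have um: "vs ! ((a+1) mod ?k) \<in> set vs" using mem mod_less_divisor[OF k0] by blast
  show ?thesis
  proof (cases "even a")
    case ev: True
    have u: "in_matching M v (vs ! ((a+1) mod ?k))" using E2[OF a(1)] ev unfolding a(2) by blast
    show ?thesis
    proof (cases "a = 0")
      case True
      have kk: "Suc (?k - 1) = ?k" using k(1) by linarith
      have k1: "?k - 1 < ?k" using k(1) by linarith
      have od: "odd (?k - 1)" using k(2) kk by (metis even_Suc)
      have md: "((?k-1)+1) mod ?k = 0" using kk by simp
      have e1: "hasse_edge P lt (vs ! (?k - 1)) (vs ! 0)" using E1[OF k1] unfolding md .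
      have e2: "\<not> in_matching M (vs ! (?k - 1)) (vs ! 0)" using E2[OF k1] od unfolding md by blast
      have "v = vs ! 0" using True a by simp
      with e1 e2 have "hasse_edge P lt v (vs ! (?k-1)) \<and> \<not> in_matching M v (vs ! (?k-1))"
        unfolding hasse_edge_def in_matching_def by blast
      moreover have "vs ! (?k-1) \<in> set vs" using mem[OF k1] .
      ultimately show ?thesis using u um by blast
    next
      case False
      have a1: "a - 1 < ?k" using a(1) by linarith
      have od: "odd (a - 1)" using False ev by simp
      have md: "((a-1)+1) mod ?k = a" using False a by simp
      have e1: "hasse_edge P lt (vs ! (a - 1)) (vs ! a)" using E1[OF a1] unfolding md .
      have e2: "\<not> in_matching M (vs ! (a - 1)) (vs ! a)" using E2[OF a1] od unfolding md by blast
      from e1 e2 have "hasse_edge P lt v (vs ! (a-1)) \<and> \<not> in_matching M v (vs ! (a-1))"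
        unfolding a(2) hasse_edge_def in_matching_def by blast
      moreover have "vs ! (a-1) \<in> set vs" using mem[OF a1] .
      ultimately show ?thesis using u um by blast
    qed
  next
    case od: False
    then have a1: "a \<ge> 1" by (cases a) auto
    have a1': "a - 1 < ?k" using a(1) by linarith
    have ev: "even (a - 1)" using od a1 by simp
    have md: "((a-1)+1) mod ?k = a" using a1 a by simp
    have e: "in_matching M (vs ! (a - 1)) (vs ! a)" using E2[OF a1'] ev unfolding md by blast
    have u: "in_matching M v (vs ! (a-1))" using e unfolding a(2) in_matching_def by blast
    have um2: "vs ! (a-1) \<in> set vs" using mem[OF a1'] .
    have b: "hasse_edge P lt v (vs ! ((a+1) mod ?k)) \<and> \<not> in_matching M v (vs ! ((a+1) mod ?k))"
      using E1[OF a(1)] E2[OF a(1)] od unfolding a(2) by blast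
    show ?thesis using u um2 b um by blast
  qed
qed

locale taxgame =
  fixes P :: "'a set" and lt :: "'a \<Rightarrow> 'a \<Rightarrow> bool" and \<rho> :: "'a \<Rightarrow> nat"
  assumes fin: "finite P" and po: "strict_po P lt" and gr: "graded P lt \<rho>"
begin

lemma irrefl: "x \<in> P \<Longrightarrow> \<not> lt x x" using po unfolding strict_po_def by blast
lemma trans: "x \<in> P \<Longrightarrow> y \<in> P \<Longrightarrow> z \<in> P \<Longrightarrow> lt x y \<Longrightarrow> lt y z \<Longrightarrow> lt x z"
  using po unfolding strict_po_def by blast
lemma rank_lt: "q \<in> P \<Longrightarrow> p \<in> P \<Longrightarrow> lt q p \<Longrightarrow> \<rho> q < \<rho> p"
  using gr unfolding graded_def by blast
lemma rank_cov: "covers P lt q p \<Longrightarrow> \<rho> p = \<rho> q + 1"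
  using gr unfolding graded_def by blast
lemma cov_of_rank: assumes "q \<in> P" "p \<in> P" "lt q p" "\<rho> p = \<rho> q + 1"
  shows "covers P lt q p"
proof -
  have "\<not> (\<exists>x\<in>P. lt q x \<and> lt x p)"
  proof
    assume "\<exists>x\<in>P. lt q x \<and> lt x p"
    then obtain x where "x \<in> P" "lt q x" "lt x p" by blast
    with rank_lt[of q x] rank_lt[of x p] assms show False by auto
  qed
  with assms show ?thesis unfolding covers_def by blast
qed

definition upset :: "'a set \<Rightarrow> bool" where
  "upset S \<longleftrightarrow> (\<forall>q\<in>S. \<forall>x\<in>P. lt q x \<longrightarrow> x \<in> S)"

lemma do_move_upset:
  assumes "upset S" "S \<subseteq> P" "p \<in> P" shows "upset (do_move lt S p)"
  unfolding upset_def do_move_def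
proof (intro ballI impI)
  fix q x assume q: "q \<in> S - {p} - {a \<in> S. lt a p}" and x: "x \<in> P" "lt q x"
  have "x \<in> S" using assms(1) q x unfolding upset_def by blast
  moreover have "x \<noteq> p" using q x by auto
  moreover have "\<not> lt x p" using q x trans[of q x p] assms by auto
  ultimately show "x \<in> S - {p} - {a \<in> S. lt a p}" by blast
qed

lemma st_upset: "legal_move_seq P lt ps \<Longrightarrow> i \<le> length ps \<Longrightarrow> upset (state_before P lt ps i)"
proof (induction i)
  case 0 then show ?case by (simp add: state_before_def upset_def)
next
  case (Suc i)
  have i: "i < length ps" using Suc by simp
  have "ps ! i \<in> state_before P lt ps i" using legal_at[OF Suc.prems(1) i] by (simp add: legal_pick_def)
  moreover have "state_before P lt ps i \<subseteq> P" unfolding state_before_def by (rule foldl_do_move_sub)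
  moreover have up: "upset (state_before P lt ps i)" using Suc.IH Suc.prems by simp
  ultimately have "upset (do_move lt (state_before P lt ps i) (ps ! i))"
    using do_move_upset by blast
  then show ?case using st_Suc[OF i] by simp
qed

lemma part2:
  assumes L: "legal_move_seq P lt ps" and len: "length qs = length ps"
    and Q: "\<forall>i<length ps. qs ! i \<in> taxed P lt ps i \<and> (\<forall>a\<in>taxed P lt ps i. \<not> lt (qs ! i) a)"
  shows "(\<forall>i<length ps. covers P lt (qs ! i) (ps ! i)) \<and>
             facf_matching P lt \<rho> (set (zip qs ps)) \<and>
             matching_weight w (set (zip qs ps)) = score w ps"
proof -
  define S where "S = state_before P lt ps"
  have SP: "\<And>i. S i \<subseteq> P" unfolding S_def state_before_def by (rule foldl_do_move_sub)
  have Smono: "\<And>i j. i \<le> j \<Longrightarrow> S j \<subseteq> S i" unfolding S_def by (rule st_mono)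
  have pS: "ps ! i \<in> S i" if i: "i < length ps" for i
    using legal_at[OF L i] by (simp add: S_def legal_pick_def)
  have qS: "qs ! i \<in> S i \<and> lt (qs!i) (ps!i)" if i: "i < length ps" for i
  proof -
    have "qs ! i \<in> taxed P lt ps i" using Q i by blast
    then show ?thesis by (simp add: taxed_def S_def)
  qed
  have Snext: "\<And>i. i < length ps \<Longrightarrow> S (Suc i) = do_move lt (S i) (ps ! i)"
    unfolding S_def by (rule st_Suc)
  have gone: "\<And>i. i < length ps \<Longrightarrow> ps ! i \<notin> S (Suc i) \<and> qs ! i \<notin> S (Suc i)"
    using Snext qS by (auto simp: do_move_def)
  have later: "\<And>i j. i < j \<Longrightarrow> j < length ps \<Longrightarrow>
      ps ! j \<notin> {ps ! i, qs ! i} \<and> qs ! j \<notin> {ps ! i, qs ! i}"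
  proof -
    fix i j assume ij: "i < j" "j < length ps"
    have "S j \<subseteq> S (Suc i)" using Smono ij by simp
    with pS[OF ij(2)] qS[of j] ij gone[of i]
    show "ps ! j \<notin> {ps ! i, qs ! i} \<and> qs ! j \<notin> {ps ! i, qs ! i}" by auto
  qed
  have cov: "\<And>i. i < length ps \<Longrightarrow> covers P lt (qs ! i) (ps ! i)"
  proof -
    fix i assume i: "i < length ps"
    have up: "upset (S i)" unfolding S_def using st_upset L i by simp
    have nx: "\<not> (\<exists>x\<in>P. lt (qs ! i) x \<and> lt x (ps ! i))"
    proof
      assume "\<exists>x\<in>P. lt (qs ! i) x \<and> lt x (ps ! i)"
      then obtain x where x: "x\<in>P" "lt (qs!i) x" "lt x (ps!i)" by blast
      have "x \<in> S i" using up x qS[OF i] unfolding upset_def by blast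
      hence "x \<in> taxed P lt ps i" using x unfolding taxed_def S_def by simp
      thus False using Q i x by blast
    qed
    show "covers P lt (qs ! i) (ps ! i)" unfolding covers_def
      using nx qS[OF i] pS[OF i] SP by blast
  qed
  have memM: "\<And>e. e \<in> set (zip qs ps) \<longleftrightarrow> (\<exists>i<length ps. e = (qs!i, ps!i))"
    by (auto simp: set_zip len)
  have dps: "distinct ps"
    unfolding distinct_conv_nth
  proof (intro allI impI)
    fix i j assume "i < length ps" "j < length ps" "i \<noteq> j"
    then show "ps ! i \<noteq> ps ! j" using later[of i j] later[of j i] by (cases "i < j") auto
  qed
  have hm: "hasse_matching P lt (set (zip qs ps))"
    unfolding hasse_matching_def
  proof (intro conjI ballI impI)
    show "set (zip qs ps) \<subseteq> {(x, y). covers P lt x y}" using memM cov by auto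
  next
    fix e e' assume e: "e \<in> set (zip qs ps)" "e' \<in> set (zip qs ps)" "e \<noteq> e'"
    then obtain i j where ij: "i < length ps" "j < length ps" "e = (qs!i, ps!i)" "e' = (qs!j, ps!j)"
      using memM by metis
    then have "i \<noteq> j" using e by auto
    then show "{fst e, snd e} \<inter> {fst e', snd e'} = {}"
      using later[of i j] later[of j i] ij by (cases "i < j") auto
  qed
  have nocyc: "\<not> (\<exists>vs. flat_alt_cycle P lt \<rho> (set (zip qs ps)) vs)"
  proof
    assume "\<exists>vs. flat_alt_cycle P lt \<rho> (set (zip qs ps)) vs"
    then obtain vs where C: "flat_alt_cycle P lt \<rho> (set (zip qs ps)) vs" by blast
    let ?M = "set (zip qs ps)"
    obtain n where fl0: "\<forall>i<length vs. \<rho> (vs ! i) = n \<or> \<rho> (vs ! i) = n + 1"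
      using C unfolding flat_alt_cycle_def Let_def by blast
    have fl: "\<And>v. v \<in> set vs \<Longrightarrow> \<rho> v = n \<or> \<rho> v = n + 1"
      using fl0 by (auto simp: in_set_conv_nth)
    have k3: "length vs \<ge> 3" using C unfolding flat_alt_cycle_def Let_def by blast
    have vsP: "set vs \<subseteq> P" using C unfolding flat_alt_cycle_def Let_def by blast
    define I where "I = {m. m < length ps \<and> ps!m \<in> set vs \<and> qs!m \<in> set vs}"
    have inm: "\<And>v u. in_matching ?M v u \<Longrightarrow> \<exists>m<length ps. {v,u} = {qs!m, ps!m}"
      unfolding in_matching_def memM by blast
    have finI: "finite I" unfolding I_def by simp
    have "vs ! 0 \<in> set vs" using k3 by (intro nth_mem) linarith
    then obtain u where "u \<in> set vs" "in_matching ?M (vs ! 0) u"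
      using cyc_nbrs[OF C] by blast
    then obtain m0 where "m0 < length ps" "{vs!0, u} = {qs!m0, ps!m0}" using inm by blast
    then have "m0 \<in> I" unfolding I_def using \<open>vs ! 0 \<in> set vs\<close> \<open>u \<in> set vs\<close>
      by (metis (no_types, lifting) doubleton_eq_iff mem_Collect_eq)
    then have Ine: "I \<noteq> {}" by blast
    define m where "m = Min I"
    have mI: "m \<in> I" unfolding m_def using finI Ine by simp
    have mmin: "\<And>m'. m' \<in> I \<Longrightarrow> m \<le> m'" unfolding m_def using finI by simp
    have ml: "m < length ps" "ps!m \<in> set vs" "qs!m \<in> set vs" using mI unfolding I_def by auto
    obtain b where b: "b \<in> set vs" "hasse_edge P lt (ps!m) b" "\<not> in_matching ?M (ps!m) b"
      using cyc_nbrs[OF C ml(2)] by blast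
    have cm: "covers P lt (qs!m) (ps!m)" using cov ml by simp
    have rpm: "\<rho> (ps!m) = n + 1" using rank_cov[OF cm] fl[OF ml(2)] fl[OF ml(3)] by auto
    have blt: "lt b (ps!m)"
    proof -
      have "\<not> covers P lt (ps!m) b" using rank_cov[of "ps!m" b] rpm fl[OF b(1)] by auto
      then have "covers P lt b (ps!m)" using b(2) unfolding hasse_edge_def by blast
      then show ?thesis unfolding covers_def by blast
    qed
    obtain u' where "u' \<in> set vs" "in_matching ?M b u'" using cyc_nbrs[OF C b(1)] by blast
    then obtain m' where m': "m' < length ps" "{b, u'} = {qs!m', ps!m'}" using inm by blast
    have "m' \<in> I" unfolding I_def using m' \<open>u' \<in> set vs\<close> b(1)
      by (metis (no_types, lifting) doubleton_eq_iff mem_Collect_eq)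
    then have "m \<le> m'" by (rule mmin)
    moreover have "m' \<noteq> m"
    proof
      assume "m' = m"
      then have "b = qs!m \<or> b = ps!m" using m' by (metis doubleton_eq_iff insertI1 insert_iff)
      moreover have "b \<noteq> ps!m" using blt irrefl b(1) vsP by auto
      moreover have "in_matching ?M (ps!m) (qs!m)" unfolding in_matching_def memM using ml by blast
      ultimately show False using b(3) by auto
    qed
    ultimately have mm': "m < m'" by simp
    have "b \<in> S m'" using m' pS qS by (metis doubleton_eq_iff insertI1 insert_commute)
    then have "b \<in> S (Suc m)" using Smono[of "Suc m" m'] mm' by auto
    moreover have "b \<in> S m" using calculation Smono[of m "Suc m"] by auto
    ultimately show False using Snext[OF ml(1)] blt by (auto simp: do_move_def)
  qed
  have dz: "distinct (zip qs ps)" using dps by (rule distinct_zipI2)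
  have mp: "map (\<lambda>(x, y). w y) (zip qs ps) = map w ps"
    by (rule nth_equalityI) (auto simp: len)
  have wt: "matching_weight w (set (zip qs ps)) = score w ps"
    unfolding matching_weight_def score_def using sum.distinct_set_conv_list[OF dz, of "\<lambda>(x, y). w y"] mp
    by simp
  show ?thesis using cov hm nocyc wt unfolding facf_matching_def by blast
qed

end




fun good :: "('a \<Rightarrow> 'a \<Rightarrow> bool) \<Rightarrow> ('a \<Rightarrow> 'a) \<Rightarrow> 'a list \<Rightarrow> bool" where
  "good lt g [] = True"
| "good lt g (p # ps) = ((\<forall>p'\<in>set ps. p' \<noteq> p \<and> g p' \<noteq> p \<and> \<not> lt p' p \<and> \<not> lt (g p') p) \<and> good lt g ps)"

lemma legal_good:
  "(\<forall>p\<in>set ps. p \<in> S \<and> g p \<in> S \<and> lt (g p) p) \<Longrightarrow> good lt g ps \<Longrightarrow> legal_seq lt S ps"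
proof (induction ps arbitrary: S)
  case Nil then show ?case by simp
next
  case (Cons p ps)
  have "legal_seq lt (do_move lt S p) ps" using Cons by (intro Cons.IH) (auto simp: do_move_def)
  then show ?case using Cons.prems by (auto simp: legal_pick_def)
qed

context taxgame
begin

lemma exists_max: "finite X \<Longrightarrow> X \<noteq> {} \<Longrightarrow> X \<subseteq> P \<Longrightarrow> \<exists>m\<in>X. \<forall>a\<in>X. \<not> lt m a"
proof (induction X rule: finite_ne_induct)
  case (singleton x) then show ?case using irrefl by auto
next
  case (insert x F)
  then obtain m where m: "m\<in>F" "\<forall>a\<in>F. \<not> lt m a" by auto
  show ?case
  proof (cases "lt m x")
    case True
    have "\<forall>a\<in>insert x F. \<not> lt x a"
    proof
      fix a assume a: "a \<in> insert x F"
      show "\<not> lt x a"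
      proof
        assume xa: "lt x a"
        show False
        proof (cases "a = x")
          case True then show False using xa irrefl insert by auto
        next
          case False
          then have "a \<in> F" using a by simp
          then show False using trans[of m x a] True xa m insert by auto
        qed
      qed
    qed
    then show ?thesis by blast
  next
    case False then show ?thesis using m by auto
  qed
qed

end

locale facf = taxgame +
  fixes M :: "('a \<times> 'a) set"
  assumes facf: "facf_matching P lt \<rho> M"
begin

definition mate :: "'a \<Rightarrow> 'a" where "mate y = (THE x. (x, y) \<in> M)"

lemma Mcov: "(x,y) \<in> M \<Longrightarrow> covers P lt x y"
  using facf unfolding facf_matching_def hasse_matching_def by blast

lemma Mdisj: "e \<in> M \<Longrightarrow> e' \<in> M \<Longrightarrow> e \<noteq> e' \<Longrightarrow> {fst e, snd e} \<inter> {fst e', snd e'} = {}"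
  using facf unfolding facf_matching_def hasse_matching_def by blast

lemma Mx_ne_y: assumes "(x,y) \<in> M" "(x',y') \<in> M" shows "x \<noteq> y'"
proof (cases "(x,y) = (x',y')")
  case True
  then show ?thesis using Mcov[OF assms(1)] irrefl unfolding covers_def by auto
next
  case False
  then show ?thesis using Mdisj[OF assms False] by auto
qed

lemma Muniq: assumes "(x,y) \<in> M" "(x',y) \<in> M" shows "x = x'"
  using Mdisj[OF assms] by auto

lemma mate_in: assumes "y \<in> snd ` M" shows "(mate y, y) \<in> M"
proof -
  obtain x where x: "(x,y) \<in> M" using assms by force
  have "(THE x. (x, y) \<in> M) = x" using x Muniq by blast
  then show ?thesis unfolding mate_def using x by simp
qed

lemma mate_cov: "y \<in> snd ` M \<Longrightarrow> covers P lt (mate y) y"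
  using mate_in Mcov by blast

lemma mate_inj: assumes "y \<in> snd ` M" "y' \<in> snd ` M" "mate y = mate y'" shows "y = y'"
proof (rule ccontr)
  assume "y \<noteq> y'"
  then show False using Mdisj[OF mate_in[OF assms(1)] mate_in[OF assms(2)]] assms(3) by auto
qed

lemma sndMP: "snd ` M \<subseteq> P" using Mcov unfolding covers_def by auto

lemma no_pred_cycle:
  assumes Z: "Z \<subseteq> snd ` M" "Z \<noteq> {}"
    and pr: "\<forall>p\<in>Z. \<exists>p'\<in>Z. p' \<noteq> p \<and> covers P lt (mate p') p"
  shows False
proof -
  define pred where "pred p = (SOME p'. p'\<in>Z \<and> p' \<noteq> p \<and> covers P lt (mate p') p)" for p
  have predZ: "\<And>p. p\<in>Z \<Longrightarrow> pred p \<in> Z \<and> pred p \<noteq> p \<and> covers P lt (mate (pred p)) p"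
  proof -
    fix p assume "p \<in> Z"
    then have "\<exists>p'. p'\<in>Z \<and> p' \<noteq> p \<and> covers P lt (mate p') p" using pr by blast
    then show "pred p \<in> Z \<and> pred p \<noteq> p \<and> covers P lt (mate (pred p)) p"
      unfolding pred_def by (rule someI_ex)
  qed
  have finZ: "finite Z" by (rule finite_subset[OF _ fin]) (use Z sndMP in blast)
  obtain z0 where z0: "z0 \<in> Z" using Z by blast
  define G where "G t = (pred ^^ t) z0" for t
  have GZ: "\<And>t. G t \<in> Z"
  proof -
    fix t show "G t \<in> Z" by (induction t) (auto simp: G_def z0 predZ)
  qed
  have ex: "\<exists>d. 0 < d \<and> (\<exists>i. G i = G (i + d))"
  proof -
    have "G ` {..card Z} \<subseteq> Z" using GZ by auto
    hence "card (G ` {..card Z}) \<le> card Z" using finZ card_mono by blast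
    hence "\<not> inj_on G {..card Z}" using card_image by fastforce
    then obtain i j where ij: "i \<noteq> j" "G i = G j" by (auto simp: inj_on_def)
    show ?thesis
    proof (cases "i < j")
      case True
      then show ?thesis using ij by (intro exI[of _ "j - i"]) (auto intro!: exI[of _ i])
    next
      case False
      then show ?thesis using ij by (intro exI[of _ "i - j"]) (auto intro!: exI[of _ j])
    qed
  qed
  define L where "L = (LEAST d. 0 < d \<and> (\<exists>i. G i = G (i + d)))"
  have L1: "0 < L \<and> (\<exists>i. G i = G (i + L))" unfolding L_def using LeastI_ex[OF ex] .
  then obtain i0 where i0: "G i0 = G (i0 + L)" and L0: "0 < L" by blast
  have Lmin: "\<And>d i. 0 < d \<Longrightarrow> d < L \<Longrightarrow> G i \<noteq> G (i + d)"
    unfolding L_def using not_less_Least by blast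
  define H where "H t = G (i0 + t)" for t
  have HS: "\<And>t. H (Suc t) = pred (H t)" by (simp add: H_def G_def)
  have HL: "H L = H 0" using i0 by (simp add: H_def)
  have HZ: "\<And>t. H t \<in> Z" using GZ by (simp add: H_def)
  have HM: "\<And>t. H t \<in> snd ` M" using HZ Z by blast
  have Hinj: "\<And>a b. a < L \<Longrightarrow> b < L \<Longrightarrow> H a = H b \<Longrightarrow> a = b"
  proof (rule ccontr)
    fix a b assume ab: "a < L" "b < L" "H a = H b" "a \<noteq> b"
    show False
    proof (cases "a < b")
      case True
      then show False using Lmin[of "b - a" "i0 + a"] ab by (simp add: H_def)
    next
      case False
      then show False using Lmin[of "a - b" "i0 + b"] ab by (simp add: H_def less_imp_diff_less)
    qed
  qed
  have L2: "L \<ge> 2"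
  proof (rule ccontr)
    assume "\<not> L \<ge> 2"
    then have "L = 1" using L0 by simp
    then have "H 1 = H 0" using HL by simp
    moreover have "H 1 = pred (H 0)" using HS[of 0] by simp
    ultimately show False using predZ[OF HZ[of 0]] by simp
  qed
  have rkpred: "\<And>p. p \<in> Z \<Longrightarrow> \<rho> (pred p) = \<rho> p"
  proof -
    fix p assume p: "p \<in> Z"
    have "\<rho> p = \<rho> (mate (pred p)) + 1" using rank_cov predZ[OF p] by blast
    moreover have "\<rho> (pred p) = \<rho> (mate (pred p)) + 1"
      using rank_cov mate_cov predZ[OF p] Z by blast
    ultimately show "\<rho> (pred p) = \<rho> p" by simp
  qed
  have rk: "\<And>t. \<rho> (H t) = \<rho> (H 0)"
  proof -
    fix t show "\<rho> (H t) = \<rho> (H 0)"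
      by (induction t) (auto simp: HS rkpred HZ)
  qed
  define n where "n = \<rho> (mate (H 0))"
  have rkH: "\<And>t. \<rho> (H t) = n + 1" using rk rank_cov[OF mate_cov[OF HM[of 0]]] n_def by simp
  have rkm: "\<And>t. \<rho> (mate (H t)) = n" using rkH rank_cov[OF mate_cov[OF HM]] by (metis add_right_cancel)
  define vs where "vs = map (\<lambda>i. if even i then mate (H (i div 2)) else H (i div 2)) [0..<2*L]"
  have lenvs: "length vs = 2*L" by (simp add: vs_def)
  have vsn: "\<And>i. i < 2*L \<Longrightarrow> vs ! i = (if even i then mate (H (i div 2)) else H (i div 2))"
    by (simp add: vs_def)
  have HP: "\<And>t. H t \<in> P" using HM sndMP by blast
  have mP: "\<And>t. mate (H t) \<in> P" using mate_cov[OF HM] unfolding covers_def by blast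
  have "flat_alt_cycle P lt \<rho> M vs"
    unfolding flat_alt_cycle_def Let_def lenvs
  proof (intro conjI)
    show "3 \<le> 2 * L" using L2 by simp
    show "even (2 * L)" by simp
    show "distinct vs" unfolding distinct_conv_nth lenvs
    proof (intro allI impI)
      fix i j assume ij: "i < 2*L" "j < 2*L" "i \<noteq> j"
      have a: "i div 2 < L" "j div 2 < L" using ij by auto
      show "vs ! i \<noteq> vs ! j"
      proof (cases "even i"; cases "even j")
        assume e: "even i" "even j"
        then have d: "i div 2 \<noteq> j div 2" using ij(3) by presburger
        have "mate (H (i div 2)) \<noteq> mate (H (j div 2))"
        proof
          assume "mate (H (i div 2)) = mate (H (j div 2))"
          then have "H (i div 2) = H (j div 2)" by (rule mate_inj[OF HM HM])
          then show False using Hinj[OF a] d by blast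
        qed
        then show ?thesis using e vsn[OF ij(1)] vsn[OF ij(2)] by simp
      next
        assume e: "even i" "odd j"
        have "mate (H (i div 2)) \<noteq> H (j div 2)" by (rule Mx_ne_y[OF mate_in[OF HM] mate_in[OF HM]])
        then show ?thesis using e vsn[OF ij(1)] vsn[OF ij(2)] by simp
      next
        assume e: "odd i" "even j"
        have "mate (H (j div 2)) \<noteq> H (i div 2)" by (rule Mx_ne_y[OF mate_in[OF HM] mate_in[OF HM]])
        then show ?thesis using e vsn[OF ij(1)] vsn[OF ij(2)] by simp
      next
        assume e: "odd i" "odd j"
        then have d: "i div 2 \<noteq> j div 2" using ij(3) by presburger
        have "H (i div 2) \<noteq> H (j div 2)" using Hinj[OF a] d by blast
        then show ?thesis using e vsn[OF ij(1)] vsn[OF ij(2)] by simp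
      qed
    qed
    show "set vs \<subseteq> P" unfolding vs_def using HP mP by auto
    show "\<forall>i<2 * L. hasse_edge P lt (vs ! i) (vs ! ((i + 1) mod (2 * L))) \<and>
        in_matching M (vs ! i) (vs ! ((i + 1) mod (2 * L))) = even i"
    proof (intro allI impI)
      fix i assume i: "i < 2 * L"
      show "hasse_edge P lt (vs ! i) (vs ! ((i + 1) mod (2 * L))) \<and>
        in_matching M (vs ! i) (vs ! ((i + 1) mod (2 * L))) = even i"
      proof (cases "even i")
        case True
        define t where "t = i div 2"
        have i1: "i + 1 < 2 * L" using i True by presburger
        then have md: "(i + 1) mod (2 * L) = i + 1" by simp
        have v1: "vs ! i = mate (H t)" using vsn[OF i] True t_def by simp
        have v2: "vs ! (i + 1) = H t" using vsn[OF i1] True t_def by simp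
        show ?thesis unfolding md v1 v2 hasse_edge_def in_matching_def
          using mate_cov[OF HM] mate_in[OF HM] True by blast
      next
        case False
        define t where "t = i div 2"
        have it: "i = 2 * t + 1" using False t_def by simp
        have v1: "vs ! i = H t" using vsn[OF i] False t_def by simp
        have v2: "vs ! ((i + 1) mod (2 * L)) = mate (H (Suc t))"
        proof (cases "Suc t < L")
          case True
          then have "(i + 1) mod (2 * L) = 2 * Suc t" using it by simp
          then show ?thesis using vsn[of "2 * Suc t"] True by simp
        next
          case False
          then have "Suc t = L" using it i by simp
          then have "i + 1 = 2 * L" using it by simp
          then have "(i + 1) mod (2 * L) = 0" by simp
          moreover have "vs ! 0 = mate (H 0)" using vsn[of 0] L0 by simp
          moreover have "H (Suc t) = H 0" using HL \<open>Suc t = L\<close> by simp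
          ultimately show ?thesis by simp
        qed
        have c: "covers P lt (mate (H (Suc t))) (H t)" using predZ[OF HZ[of t]] HS by simp
        have n1: "(H t, mate (H (Suc t))) \<notin> M"
        proof
          assume "(H t, mate (H (Suc t))) \<in> M"
          from Mx_ne_y[OF this mate_in[OF HM[of t]]] show False by simp
        qed
        have n2: "(mate (H (Suc t)), H t) \<notin> M"
        proof
          assume "(mate (H (Suc t)), H t) \<in> M"
          then have "mate (H (Suc t)) = mate (H t)" using Muniq mate_in[OF HM[of t]] by blast
          then have "H (Suc t) = H t" by (rule mate_inj[OF HM HM])
          then show False using predZ[OF HZ[of t]] HS by simp
        qed
        show ?thesis unfolding v1 v2 hasse_edge_def in_matching_def using c n1 n2 False by blast
      qed
    qed
    show "\<exists>n. \<forall>i<2 * L. \<rho> (vs ! i) = n \<or> \<rho> (vs ! i) = n + 1"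
    proof (intro exI[of _ n] allI impI)
      fix i assume "i < 2 * L"
      then show "\<rho> (vs ! i) = n \<or> \<rho> (vs ! i) = n + 1" using rkH rkm by (simp add: vsn)
    qed
  qed
  then show False using facf unfolding facf_matching_def by blast
qed

lemma exists_first:
  assumes Y: "Y \<subseteq> snd ` M" "Y \<noteq> {}"
  shows "\<exists>p\<in>Y. \<forall>p'\<in>Y. p' \<noteq> p \<longrightarrow> \<not> lt (mate p') p"
proof (rule ccontr)
  assume N: "\<not> ?thesis"
  have finY: "finite Y" by (rule finite_subset[OF _ fin]) (use Y sndMP in blast)
  define r where "r = Min (\<rho> ` Y)"
  define Z where "Z = {p\<in>Y. \<rho> p = r}"
  have "r \<in> \<rho> ` Y" unfolding r_def using finY Y(2) by (intro Min_in) auto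
  then have Zne: "Z \<noteq> {}" unfolding Z_def by auto
  have rmin: "\<And>p. p\<in>Y \<Longrightarrow> r \<le> \<rho> p" unfolding r_def using finY by (intro Min_le) auto
  have "\<forall>p\<in>Z. \<exists>p'\<in>Z. p' \<noteq> p \<and> covers P lt (mate p') p"
  proof
    fix p assume p: "p\<in>Z"
    then have pY: "p \<in> Y" and rp: "\<rho> p = r" unfolding Z_def by auto
    have "\<exists>p'\<in>Y. p' \<noteq> p \<and> lt (mate p') p" using N pY by blast
    then obtain p' where p': "p'\<in>Y" "p' \<noteq> p" "lt (mate p') p" by blast
    have c': "covers P lt (mate p') p'" using mate_cov p' Y by blast
    have mP: "mate p' \<in> P" using c' unfolding covers_def by blast
    have pP: "p \<in> P" using pY Y sndMP by blast
    have "\<rho> (mate p') < \<rho> p" using rank_lt[OF mP pP p'(3)] .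
    moreover have "\<rho> p' = \<rho> (mate p') + 1" using rank_cov[OF c'] .
    moreover have "\<rho> p' \<ge> r" using rmin p' by simp
    ultimately have eq: "\<rho> p' = r" "\<rho> p = \<rho> (mate p') + 1" using rp by auto
    have "covers P lt (mate p') p" using cov_of_rank[OF mP pP p'(3) eq(2)] .
    moreover have "p' \<in> Z" unfolding Z_def using p' eq by simp
    ultimately show "\<exists>p'\<in>Z. p' \<noteq> p \<and> covers P lt (mate p') p" using p' by blast
  qed
  moreover have "Z \<subseteq> snd ` M" unfolding Z_def using Y by blast
  ultimately show False using no_pred_cycle Zne by blast
qed

lemma order_exists: "Y \<subseteq> snd ` M \<Longrightarrow> \<exists>ps. distinct ps \<and> set ps = Y \<and> good lt mate ps"
proof (induction "card Y" arbitrary: Y rule: less_induct)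
  case less
  show ?case
  proof (cases "Y = {}")
    case True then show ?thesis by (intro exI[of _ "[]"]) simp
  next
    case False
    obtain p where p: "p \<in> Y" "\<forall>p'\<in>Y. p' \<noteq> p \<longrightarrow> \<not> lt (mate p') p"
      using exists_first less.prems False by blast
    have finY: "finite Y" by (rule finite_subset[OF _ fin]) (use less.prems sndMP in blast)
    have "card (Y - {p}) < card Y" by (rule card_Diff1_less[OF finY p(1)])
    then obtain ps where ps: "distinct ps" "set ps = Y - {p}" "good lt mate ps"
      using less.hyps less.prems by blast
    have "good lt mate (p # ps)"
    proof -
      have "\<forall>p'\<in>set ps. p' \<noteq> p \<and> mate p' \<noteq> p \<and> \<not> lt p' p \<and> \<not> lt (mate p') p"
      proof
        fix p' assume "p' \<in> set ps"
        then have p': "p' \<in> Y" "p' \<noteq> p" using ps by auto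
        have yM: "p' \<in> snd ` M" "p \<in> snd ` M" using p' p less.prems by auto
        have "mate p' \<noteq> p" using Mx_ne_y mate_in yM by blast
        moreover have "\<not> lt (mate p') p" using p p' by blast
        moreover have "\<not> lt p' p"
        proof
          assume "lt p' p"
          moreover have "covers P lt (mate p') p'" using mate_cov yM by blast
          ultimately have "lt (mate p') p" using trans[of "mate p'" p' p] sndMP yM
            unfolding covers_def by blast
          then show False using p p' by blast
        qed
        ultimately show "p' \<noteq> p \<and> mate p' \<noteq> p \<and> \<not> lt p' p \<and> \<not> lt (mate p') p" using p' by blast
      qed
      then show ?thesis using ps by simp
    qed
    then show ?thesis using ps p by (intro exI[of _ "p#ps"]) auto
  qed
qed

lemma part3: "\<exists>ps. legal_move_seq P lt ps \<and> distinct ps \<and> set ps = snd ` M \<and>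
                score w ps = matching_weight w M"
proof -
  obtain ps where ps: "distinct ps" "set ps = snd ` M" "good lt mate ps"
    using order_exists by blast
  have "legal_seq lt P ps"
  proof (rule legal_good[OF _ ps(3)])
    show "\<forall>p\<in>set ps. p \<in> P \<and> mate p \<in> P \<and> lt (mate p) p"
      using ps(2) mate_cov unfolding covers_def by blast
  qed
  moreover have "score w ps = matching_weight w M"
  proof -
    have "score w ps = sum w (snd ` M)"
      unfolding score_def using sum.distinct_set_conv_list[OF ps(1), of w] ps(2) by simp
    also have "\<dots> = sum (w \<circ> snd) M"
    proof (rule sum.reindex)
      show "inj_on snd M" unfolding inj_on_def using Muniq by auto
    qed
    also have "\<dots> = matching_weight w M"
      unfolding matching_weight_def by (intro sum.cong) auto
    finally show ?thesis .
  qed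
  ultimately show ?thesis using ps unfolding legal_move_seq_def by blast
qed

end


theorem theorem1:
  fixes P :: "'a set" and lt :: "'a \<Rightarrow> 'a \<Rightarrow> bool"
    and \<rho> :: "'a \<Rightarrow> nat" and w :: "'a \<Rightarrow> real"
  assumes "finite P"
    and "strict_po P lt"
    and "graded P lt \<rho>"
  shows "Max {score w ps | ps. legal_move_seq P lt ps}
           = Max {matching_weight w M | M. facf_matching P lt \<rho> M}
         \<and> (\<forall>ps qs. legal_move_seq P lt ps \<longrightarrow> length qs = length ps \<longrightarrow>
             (\<forall>i<length ps. qs ! i \<in> taxed P lt ps i \<and>
                (\<forall>a\<in>taxed P lt ps i. \<not> lt (qs ! i) a)) \<longrightarrow>
             (\<forall>i<length ps. covers P lt (qs ! i) (ps ! i)) \<and>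
             facf_matching P lt \<rho> (set (zip qs ps)) \<and>
             matching_weight w (set (zip qs ps)) = score w ps)
         \<and> (\<forall>M. facf_matching P lt \<rho> M \<longrightarrow>
             (\<exists>ps. legal_move_seq P lt ps \<and> distinct ps \<and> set ps = snd ` M \<and>
                score w ps = matching_weight w M))"
proof -
  interpret T: taxgame P lt \<rho> using assms by unfold_locales
  have P2: "\<forall>ps qs. legal_move_seq P lt ps \<longrightarrow> length qs = length ps \<longrightarrow>
             (\<forall>i<length ps. qs ! i \<in> taxed P lt ps i \<and>
                (\<forall>a\<in>taxed P lt ps i. \<not> lt (qs ! i) a)) \<longrightarrow>
             (\<forall>i<length ps. covers P lt (qs ! i) (ps ! i)) \<and>
             facf_matching P lt \<rho> (set (zip qs ps)) \<and>
             matching_weight w (set (zip qs ps)) = score w ps"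
    by (intro allI impI, rule T.part2, assumption+)
  have P3: "\<forall>M. facf_matching P lt \<rho> M \<longrightarrow>
             (\<exists>ps. legal_move_seq P lt ps \<and> distinct ps \<and> set ps = snd ` M \<and>
                score w ps = matching_weight w M)"
  proof (intro allI impI)
    fix M assume "facf_matching P lt \<rho> M"
    then interpret F: facf P lt \<rho> M using assms by unfold_locales
    show "\<exists>ps. legal_move_seq P lt ps \<and> distinct ps \<and> set ps = snd ` M \<and>
                score w ps = matching_weight w M" by (rule F.part3)
  qed
  have QEX: "\<exists>qs. length qs = length ps \<and> (\<forall>i<length ps. qs ! i \<in> taxed P lt ps i \<and>
                (\<forall>a\<in>taxed P lt ps i. \<not> lt (qs ! i) a))" if L: "legal_move_seq P lt ps" for ps
  proof -
    have ex: "\<exists>q. q \<in> taxed P lt ps i \<and> (\<forall>a\<in>taxed P lt ps i. \<not> lt q a)" if i: "i < length ps" for i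
    proof -
      have "taxed P lt ps i \<subseteq> state_before P lt ps i" unfolding taxed_def by blast
      also have "\<dots> \<subseteq> P" unfolding state_before_def by (rule foldl_do_move_sub)
      finally have sub: "taxed P lt ps i \<subseteq> P" .
      obtain q where q: "q \<in> state_before P lt ps i" "lt q (ps ! i)"
        using legal_at[OF L i] unfolding legal_pick_def by blast
      then have "q \<in> taxed P lt ps i" unfolding taxed_def by simp
      then have ne: "taxed P lt ps i \<noteq> {}" by blast
      obtain m where "m \<in> taxed P lt ps i" "\<forall>a\<in>taxed P lt ps i. \<not> lt m a"
        using T.exists_max[OF finite_subset[OF sub assms(1)] ne sub] by blast
      then show ?thesis by blast
    qed
    define qs where "qs = map (\<lambda>i. SOME q. q \<in> taxed P lt ps i \<and> (\<forall>a\<in>taxed P lt ps i. \<not> lt q a))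
        [0..<length ps]"
    have "length qs = length ps" by (simp add: qs_def)
    moreover have "\<forall>i<length ps. qs ! i \<in> taxed P lt ps i \<and> (\<forall>a\<in>taxed P lt ps i. \<not> lt (qs ! i) a)"
    proof (intro allI impI)
      fix i assume i: "i < length ps"
      have "qs ! i = (SOME q. q \<in> taxed P lt ps i \<and> (\<forall>a\<in>taxed P lt ps i. \<not> lt q a))"
        unfolding qs_def using i by simp
      then show "qs ! i \<in> taxed P lt ps i \<and> (\<forall>a\<in>taxed P lt ps i. \<not> lt (qs ! i) a)"
        using someI_ex[OF ex[OF i]] by simp
    qed
    ultimately show ?thesis by blast
  qed
  have eq: "{score w ps | ps. legal_move_seq P lt ps} = {matching_weight w M | M. facf_matching P lt \<rho> M}"
  proof (intro equalityI subsetI)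
    fix s assume "s \<in> {score w ps | ps. legal_move_seq P lt ps}"
    then obtain ps where ps: "legal_move_seq P lt ps" "s = score w ps" by blast
    obtain qs where q1: "length qs = length ps" and q2: "\<forall>i<length ps. qs ! i \<in> taxed P lt ps i \<and>
                (\<forall>a\<in>taxed P lt ps i. \<not> lt (qs ! i) a)" using QEX[OF ps(1)] by blast
    have "facf_matching P lt \<rho> (set (zip qs ps)) \<and> matching_weight w (set (zip qs ps)) = score w ps"
      using T.part2[OF ps(1) q1 q2] by blast
    then have "facf_matching P lt \<rho> (set (zip qs ps)) \<and> matching_weight w (set (zip qs ps)) = s"
      using ps(2) by simp
    then show "s \<in> {matching_weight w M | M. facf_matching P lt \<rho> M}" by blast
  next
    fix s assume "s \<in> {matching_weight w M | M. facf_matching P lt \<rho> M}"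
    then obtain M where "facf_matching P lt \<rho> M" "s = matching_weight w M" by blast
    then obtain ps where "legal_move_seq P lt ps" "score w ps = s" using P3 by blast
    then show "s \<in> {score w ps | ps. legal_move_seq P lt ps}" by blast
  qed
  have mx: "Max {score w ps | ps. legal_move_seq P lt ps}
           = Max {matching_weight w M | M. facf_matching P lt \<rho> M}" by (simp only: eq)
  show ?thesis by (rule conjI[OF mx conjI[OF P2 P3]])
qed

end
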